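(* Let $F:[0,\infty)\to\mathbb{R}$ be $C^{1,1}$ with $F'(0)=0$ and set $M:=\max\{1,\limsup_{t\downarrow0}|F'(t)|/t\}$. There exist $T>0$, $L=L(M)>1$ (depending only on $M$), and an $L$-bi-Lipschitz map $G:B^2(0,T)\to B^2(0,T)$ with $G(0)=0$ such that for each $s\in\mathbb{S}^1$ the curve $t\mapsto(G(ts),F(|G(ts)|))$ is horizontal. Moreover, $|G(st)|=|G(s't)|$ for any $s,s'\in\mathbb{S}^1$ and $t\in[0,T)$.
   Context: $B^2(0,T)$ is the open Euclidean disc of radius $T$ centred at the origin of $\mathbb{R}^2$, with the Euclidean metric; $\mathbb{S}^1$ is the unit circle. An absolutely continuous curve $(x(t),y(t),z(t))$ in $\mathbb{R}^3$ is horizontal if $z'+\tfrac12x'y-\tfrac12xy'=0$ almost everywhere. $G$ is $L$-bi-Lipschitz if $L^{-1}|a-b|\le|G(a)-G(b)|\le L|a-b|$. *)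

theory Defs
  imports "HOL-Analysis.Analysis"
begin

definition abs_cont_on_interval :: "real \<Rightarrow> real \<Rightarrow> (real \<Rightarrow> 'a::real_normed_vector) \<Rightarrow> bool" where
  "abs_cont_on_interval c d \<gamma> \<longleftrightarrow>
     (\<forall>\<epsilon>>0. \<exists>\<delta>>0. \<forall>(n::nat) (a::nat \<Rightarrow> real) (b::nat \<Rightarrow> real).
        (\<forall>i<n. c \<le> a i \<and> a i \<le> b i \<and> b i \<le> d) \<and>
        (\<forall>i<n. \<forall>j<n. i \<noteq> j \<longrightarrow> b i \<le> a j \<or> b j \<le> a i) \<and>
        (\<Sum>i<n. b i - a i) < \<delta>
        \<longrightarrow> (\<Sum>i<n. norm (\<gamma> (b i) - \<gamma> (a i))) < \<epsilon>)"

definition abs_cont_on :: "real set \<Rightarrow> (real \<Rightarrow> 'a::real_normed_vector) \<Rightarrow> bool" where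
  "abs_cont_on I \<gamma> \<longleftrightarrow> (\<forall>c d. {c..d} \<subseteq> I \<longrightarrow> abs_cont_on_interval c d \<gamma>)"

text \<open>Horizontal curves in the Heisenberg group R^3 (coordinates (x,y,z)).\<close>
definition horizontal_on :: "real set \<Rightarrow> (real \<Rightarrow> real \<times> real \<times> real) \<Rightarrow> bool" where
  "horizontal_on I \<gamma> \<longleftrightarrow> abs_cont_on I \<gamma> \<and>
     (AE t in lborel. t \<in> I \<longrightarrow>
        (\<exists>x' y' z'. (\<gamma> has_vector_derivative (x', y', z')) (at t) \<and>
            z' + x' * fst (snd (\<gamma> t)) / 2 - fst (\<gamma> t) * y' / 2 = 0))"

definition bilipschitz_on :: "real \<Rightarrow> 'a::metric_space set \<Rightarrow> ('a \<Rightarrow> 'b::metric_space) \<Rightarrow> bool" where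
  "bilipschitz_on L S G \<longleftrightarrow>
     (\<forall>a\<in>S. \<forall>b\<in>S. dist a b / L \<le> dist (G a) (G b) \<and> dist (G a) (G b) \<le> L * dist a b)"

definition Mconst :: "(real \<Rightarrow> real) \<Rightarrow> real" where
  "Mconst F' = max 1 (real_of_ereal (Limsup (at_right 0) (\<lambda>t. ereal (\<bar>F' t\<bar> / t))))"

end

theory Submission imports Defs begin

lemma cos_lip: "\<bar>cos (x::real) - cos y\<bar> \<le> \<bar>x - y\<bar>"
proof -
  have "norm (cos x - cos y) \<le> 1 * norm (x - y)"
    by (rule field_differentiable_bound[of UNIV cos "\<lambda>z. - sin z"])
       (auto intro!: derivative_eq_intros)
  then show ?thesis by simp
qed

lemma sin_lip: "\<bar>sin (x::real) - sin y\<bar> \<le> \<bar>x - y\<bar>"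
proof -
  have "norm (sin x - sin y) \<le> 1 * norm (x - y)"
    by (rule field_differentiable_bound[of UNIV sin "\<lambda>z. cos z"])
       (auto intro!: derivative_eq_intros)
  then show ?thesis by simp
qed

lemma cis_lip: "cmod (cis A - cis B) \<le> 2 * \<bar>A - B\<bar>"
proof -
  have "cmod (cis A - cis B) \<le> \<bar>Re (cis A - cis B)\<bar> + \<bar>Im (cis A - cis B)\<bar>"
    by (rule cmod_le)
  also have "\<dots> \<le> 2 * \<bar>A - B\<bar>" using cos_lip[of A B] sin_lip[of A B] by simp
  finally show ?thesis .
qed

lemma spiral_aux:
  fixes \<psi> \<psi>' :: "real \<Rightarrow> real"
  assumes c: "c \<ge> 0"
    and d: "\<And>r. 0 < r \<Longrightarrow> r < T \<Longrightarrow> (\<psi> has_real_derivative \<psi>' r) (at r)"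
    and bd: "\<And>r. 0 < r \<Longrightarrow> r < T \<Longrightarrow> r * \<bar>\<psi>' r\<bar> \<le> c"
    and a: "cmod a < T" and ba: "cmod b \<le> cmod a"
  shows "cmod (a * cis (\<psi> (cmod a)) - b * cis (\<psi> (cmod b))) \<le> (1 + 2 * c) * cmod (a - b)"
proof (cases "b = 0")
  case True
  then show ?thesis using c mult_nonneg_nonneg[of c "cmod a"] by (simp add: norm_mult algebra_simps)
next
  case False
  hence b0: "cmod b > 0" by simp
  have "norm (\<psi> (cmod a) - \<psi> (cmod b)) \<le> (c / cmod b) * norm (cmod a - cmod b)"
  proof (rule field_differentiable_bound[of "{cmod b..cmod a}" \<psi> \<psi>'])
    fix z assume z: "z \<in> {cmod b..cmod a}"
    then show "(\<psi> has_field_derivative \<psi>' z) (at z within {cmod b..cmod a})"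
      using d[of z] b0 a by (auto simp del: zero_less_norm_iff intro: has_field_derivative_at_within)
    have zp: "z > 0" "z < T" using z b0 a by (auto simp del: zero_less_norm_iff)
    have "z * \<bar>\<psi>' z\<bar> \<le> c" using bd zp by auto
    hence "\<bar>\<psi>' z\<bar> \<le> c / z" using zp by (simp add: field_simps mult.commute)
    also have "\<dots> \<le> c / cmod b" using zp b0 c z by (intro divide_left_mono) (auto simp del: zero_less_norm_iff)
    finally show "norm (\<psi>' z) \<le> c / cmod b" by simp
  qed (use ba in auto)
  hence h: "cmod b * \<bar>\<psi> (cmod a) - \<psi> (cmod b)\<bar> \<le> c * (cmod a - cmod b)"
    using b0 ba by (simp add: field_simps)
  have "cmod (a * cis (\<psi> (cmod a)) - b * cis (\<psi> (cmod b)))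
      = cmod ((a - b) * cis (\<psi> (cmod a)) + b * (cis (\<psi> (cmod a)) - cis (\<psi> (cmod b))))"
    by (simp add: algebra_simps)
  also have "\<dots> \<le> cmod ((a - b) * cis (\<psi> (cmod a))) + cmod (b * (cis (\<psi> (cmod a)) - cis (\<psi> (cmod b))))"
    by (rule norm_triangle_ineq)
  also have "\<dots> \<le> cmod (a - b) + cmod b * (2 * \<bar>\<psi> (cmod a) - \<psi> (cmod b)\<bar>)"
    using cis_lip[of "\<psi> (cmod a)" "\<psi> (cmod b)"] by (simp add: norm_mult mult_left_mono)
  also have "\<dots> \<le> cmod (a - b) + 2 * c * (cmod a - cmod b)" using h by simp
  also have "\<dots> \<le> cmod (a - b) + 2 * c * cmod (a - b)"
    using c norm_triangle_ineq2[of a b] by (simp add: mult_left_mono)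
  finally show ?thesis by (simp add: algebra_simps)
qed

lemma spiral_lip:
  fixes \<psi> \<psi>' :: "real \<Rightarrow> real"
  assumes c: "c \<ge> 0"
    and d: "\<And>r. 0 < r \<Longrightarrow> r < T \<Longrightarrow> (\<psi> has_real_derivative \<psi>' r) (at r)"
    and bd: "\<And>r. 0 < r \<Longrightarrow> r < T \<Longrightarrow> r * \<bar>\<psi>' r\<bar> \<le> c"
    and a: "cmod a < T" and b: "cmod b < T"
  shows "cmod (a * cis (\<psi> (cmod a)) - b * cis (\<psi> (cmod b))) \<le> (1 + 2 * c) * cmod (a - b)"
proof (cases "cmod b \<le> cmod a")
  case True then show ?thesis using spiral_aux[OF c d bd a] by blast
next
  case False
  then have "cmod (b * cis (\<psi> (cmod b)) - a * cis (\<psi> (cmod a))) \<le> (1 + 2 * c) * cmod (b - a)"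
    using spiral_aux[OF c d bd b] by simp
  then show ?thesis by (simp add: norm_minus_commute)
qed

lemma lip_abs_cont:
  fixes \<gamma> :: "real \<Rightarrow> 'a::real_normed_vector"
  assumes C: "C \<ge> 0" and L: "\<And>u v. u \<in> {c..d} \<Longrightarrow> v \<in> {c..d} \<Longrightarrow> norm (\<gamma> u - \<gamma> v) \<le> C * \<bar>u - v\<bar>"
  shows "abs_cont_on_interval c d \<gamma>"
  unfolding abs_cont_on_interval_def
proof (intro allI impI)
  fix \<epsilon> :: real assume e: "\<epsilon> > 0"
  show "\<exists>\<delta>>0. \<forall>(n::nat) (a::nat \<Rightarrow> real) (b::nat \<Rightarrow> real).
        (\<forall>i<n. c \<le> a i \<and> a i \<le> b i \<and> b i \<le> d) \<and>
        (\<forall>i<n. \<forall>j<n. i \<noteq> j \<longrightarrow> b i \<le> a j \<or> b j \<le> a i) \<and>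
        (\<Sum>i<n. b i - a i) < \<delta>
        \<longrightarrow> (\<Sum>i<n. norm (\<gamma> (b i) - \<gamma> (a i))) < \<epsilon>"
  proof (intro exI[of _ "\<epsilon> / (C + 1)"] conjI allI impI)
    show "\<epsilon> / (C + 1) > 0" using e C by simp
    fix n :: nat and a b :: "nat \<Rightarrow> real"
    assume h: "(\<forall>i<n. c \<le> a i \<and> a i \<le> b i \<and> b i \<le> d) \<and>
        (\<forall>i<n. \<forall>j<n. i \<noteq> j \<longrightarrow> b i \<le> a j \<or> b j \<le> a i) \<and>
        (\<Sum>i<n. b i - a i) < \<epsilon> / (C + 1)"
    have "(\<Sum>i<n. norm (\<gamma> (b i) - \<gamma> (a i))) \<le> (\<Sum>i<n. C * (b i - a i))"
    proof (rule sum_mono)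
      fix i assume "i \<in> {..<n}"
      then have "c \<le> a i" "a i \<le> b i" "b i \<le> d" using h by auto
      then show "norm (\<gamma> (b i) - \<gamma> (a i)) \<le> C * (b i - a i)" using L[of "b i" "a i"] by auto
    qed
    also have "\<dots> = C * (\<Sum>i<n. b i - a i)" by (simp add: sum_distrib_left)
    also have "\<dots> \<le> C * (\<epsilon> / (C + 1))" using h C by (intro mult_left_mono) auto
    also have "\<dots> < \<epsilon>" using C e by (simp add: field_simps)
    finally show "(\<Sum>i<n. norm (\<gamma> (b i) - \<gamma> (a i))) < \<epsilon>" .
  qed
qed

theorem lemma5p3:
  shows "\<exists>Lf :: real \<Rightarrow> real. (\<forall>m\<ge>1. Lf m > 1) \<and>
    (\<forall>(F :: real \<Rightarrow> real) (F' :: real \<Rightarrow> real).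
       (\<forall>t\<ge>0. (F has_real_derivative F' t) (at t within {0..})) \<and>
       (\<exists>K. \<forall>x\<ge>0. \<forall>y\<ge>0. \<bar>F' x - F' y\<bar> \<le> K * \<bar>x - y\<bar>) \<and>
       F' 0 = 0
       \<longrightarrow>
       (\<exists>T>0. \<exists>G :: complex \<Rightarrow> complex.
          bilipschitz_on (Lf (Mconst F')) (ball 0 T) G \<and>
          G ` ball 0 T \<subseteq> ball 0 T \<and> G 0 = 0 \<and>
          (\<forall>s\<in>sphere 0 1. horizontal_on {0..<T}
              (\<lambda>t. (Re (G (of_real t * s)), Im (G (of_real t * s)),
                     F (cmod (G (of_real t * s)))))) \<and>
          (\<forall>s\<in>sphere 0 1. \<forall>s'\<in>sphere 0 1. \<forall>t\<in>{0..<T}.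
              cmod (G (of_real t * s)) = cmod (G (of_real t * s')))))"
proof (rule exI[of _ "\<lambda>m. 4 * m + 5"], rule conjI)
  show "\<forall>m\<ge>1. 4 * m + 5 > (1::real)" by simp
  show "\<forall>(F :: real \<Rightarrow> real) (F' :: real \<Rightarrow> real).
       (\<forall>t\<ge>0. (F has_real_derivative F' t) (at t within {0..})) \<and>
       (\<exists>K. \<forall>x\<ge>0. \<forall>y\<ge>0. \<bar>F' x - F' y\<bar> \<le> K * \<bar>x - y\<bar>) \<and>
       F' 0 = 0
       \<longrightarrow>
       (\<exists>T>0. \<exists>G :: complex \<Rightarrow> complex.
          bilipschitz_on (4 * Mconst F' + 5) (ball 0 T) G \<and>
          G ` ball 0 T \<subseteq> ball 0 T \<and> G 0 = 0 \<and>
          (\<forall>s\<in>sphere 0 1. horizontal_on {0..<T}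
              (\<lambda>t. (Re (G (of_real t * s)), Im (G (of_real t * s)),
                     F (cmod (G (of_real t * s)))))) \<and>
          (\<forall>s\<in>sphere 0 1. \<forall>s'\<in>sphere 0 1. \<forall>t\<in>{0..<T}.
              cmod (G (of_real t * s)) = cmod (G (of_real t * s'))))"
  proof (intro allI impI)
  fix F F' :: "real \<Rightarrow> real"
  assume H: "(\<forall>t\<ge>0. (F has_real_derivative F' t) (at t within {0..})) \<and>
       (\<exists>K. \<forall>x\<ge>0. \<forall>y\<ge>0. \<bar>F' x - F' y\<bar> \<le> K * \<bar>x - y\<bar>) \<and> F' 0 = 0"
  then have dF: "\<And>t. t \<ge> 0 \<Longrightarrow> (F has_real_derivative F' t) (at t within {0..})"
    and F0: "F' 0 = 0" by auto
  from H obtain K where K: "\<And>x y. x \<ge> 0 \<Longrightarrow> y \<ge> 0 \<Longrightarrow> \<bar>F' x - F' y\<bar> \<le> K * \<bar>x - y\<bar>" by auto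
  have K0: "K \<ge> 0" using K[of 0 1] by simp
  have Fb: "\<And>t. t \<ge> 0 \<Longrightarrow> \<bar>F' t\<bar> \<le> K * t" using K[of _ 0] F0 by force
  define M where "M = Mconst F'"
  have M1: "M \<ge> 1" unfolding M_def Mconst_def by simp
  define l where "l = Limsup (at_right (0::real)) (\<lambda>t. ereal (\<bar>F' t\<bar> / t))"
  have lK: "l \<le> ereal K" unfolding l_def
  proof (rule Limsup_bounded)
    show "\<forall>\<^sub>F t in at_right 0. ereal (\<bar>F' t\<bar> / t) \<le> ereal K"
      unfolding eventually_at_right_field
    proof (intro exI[of _ 1] conjI allI impI)
      fix y :: real assume "0 < y" "y < 1"
      then show "ereal (\<bar>F' y\<bar> / y) \<le> ereal K" using Fb[of y] by (simp add: divide_le_eq mult.commute)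
    qed simp
  qed
  have lM: "l < ereal (M + 1)"
  proof (cases l)
    case (real r)
    then have "r \<le> M" unfolding M_def Mconst_def l_def[symmetric] by simp
    then show ?thesis using real by simp
  next
    case PInf then show ?thesis using lK by simp
  next
    case MInf then show ?thesis by simp
  qed
  from Limsup_lessD[OF lM[unfolded l_def]] obtain T where T0: "T > 0"
    and TM: "\<And>t. 0 < t \<Longrightarrow> t < T \<Longrightarrow> \<bar>F' t\<bar> / t < M + 1"
    unfolding eventually_at_right_field by auto
  define g where "g u = 2 * F' u / u^2" for u
  define \<phi> where "\<phi> r = - integral {r..T} g" for r
  have contF': "continuous_on {0..} F'"
  proof -
    have "lipschitz_on K {0..} F'" unfolding lipschitz_on_def using K K0 by (auto simp: dist_real_def)
    then show ?thesis by (rule lipschitz_on_continuous_on)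
  qed
  have dphi: "(\<phi> has_real_derivative g r) (at r)" if r: "0 < r" "r < T" for r
  proof -
    have cg: "continuous_on {r/2..T} g" unfolding g_def using r
      by (intro continuous_intros continuous_on_subset[OF contF']) auto
    have "((\<lambda>x. integral {x..T} g) has_real_derivative - g r) (at r within {r/2..T})"
      by (rule integral_has_real_derivative'[OF cg]) (use r in auto)
    moreover have "at r within {r/2..T} = at r" using r by (intro at_within_interior) auto
    ultimately have "((\<lambda>x. integral {x..T} g) has_real_derivative - g r) (at r)" by simp
    then have "((\<lambda>x. - integral {x..T} g) has_real_derivative - (- g r)) (at r)" by (rule DERIV_minus)
    then show ?thesis unfolding \<phi>_def by simp
  qed
  have dphi': "((\<lambda>x. - \<phi> x) has_real_derivative - g r) (at r)" if r: "0 < r" "r < T" for r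
    using DERIV_minus[OF dphi[OF r]] .
  have gbd: "r * \<bar>g r\<bar> \<le> 2 * (M + 1)" if r: "0 < r" "r < T" for r
  proof -
    have "r * \<bar>g r\<bar> = 2 * (\<bar>F' r\<bar> / r)" unfolding g_def using r
      by (simp add: abs_mult power2_eq_square field_simps)
    then show ?thesis using TM[OF r] by simp
  qed
  have gbd': "r * \<bar>- g r\<bar> \<le> 2 * (M + 1)" if r: "0 < r" "r < T" for r
    using gbd[OF r] by simp
  define G where "G z = z * cis (\<phi> (cmod z))" for z
  define Hi where "Hi z = z * cis (- \<phi> (cmod z))" for z
  have c0: "2 * (M + 1) \<ge> 0" using M1 by simp
  have L: "1 + 2 * (2 * (M + 1)) = 4 * M + 5" by simp
  have Gup: "cmod (G a - G b) \<le> (4 * M + 5) * cmod (a - b)" if "cmod a < T" "cmod b < T" for a b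
    using spiral_lip[OF c0 dphi gbd that] unfolding G_def L by blast
  have Hup: "cmod (Hi a - Hi b) \<le> (4 * M + 5) * cmod (a - b)" if "cmod a < T" "cmod b < T" for a b
    using spiral_lip[OF c0 dphi' gbd' that] unfolding Hi_def L by blast
  have normG: "cmod (G z) = cmod z" for z unfolding G_def by (simp add: norm_mult)
  have HG: "Hi (G z) = z" for z unfolding Hi_def normG unfolding G_def
    by (simp add: mult.assoc cis_mult)
  show "\<exists>T>0. \<exists>G :: complex \<Rightarrow> complex.
          bilipschitz_on (4 * Mconst F' + 5) (ball 0 T) G \<and>
          G ` ball 0 T \<subseteq> ball 0 T \<and> G 0 = 0 \<and>
          (\<forall>s\<in>sphere 0 1. horizontal_on {0..<T}
              (\<lambda>t. (Re (G (of_real t * s)), Im (G (of_real t * s)),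
                     F (cmod (G (of_real t * s)))))) \<and>
          (\<forall>s\<in>sphere 0 1. \<forall>s'\<in>sphere 0 1. \<forall>t\<in>{0..<T}.
              cmod (G (of_real t * s)) = cmod (G (of_real t * s')))"
    unfolding M_def[symmetric]
  proof (intro exI[of _ T] exI[of _ G] conjI T0)
    show "bilipschitz_on (4 * M + 5) (ball 0 T) G"
      unfolding bilipschitz_on_def
    proof (intro ballI conjI)
      fix a b :: complex assume ab: "a \<in> ball 0 T" "b \<in> ball 0 T"
      then have ab': "cmod a < T" "cmod b < T" by auto
      show "dist (G a) (G b) \<le> (4 * M + 5) * dist a b"
        using Gup[OF ab'] by (simp add: dist_norm)
      have "cmod (a - b) = cmod (Hi (G a) - Hi (G b))" by (simp add: HG)
      also have "\<dots> \<le> (4 * M + 5) * cmod (G a - G b)" using Hup[of "G a" "G b"] ab' normG by simp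
      finally show "dist a b / (4 * M + 5) \<le> dist (G a) (G b)"
        using M1 by (simp add: dist_norm divide_le_eq mult.commute)
    qed
    show "G ` ball 0 T \<subseteq> ball 0 T" using normG by auto
    show "G 0 = 0" unfolding G_def by simp
    show "\<forall>s\<in>sphere 0 1. \<forall>s'\<in>sphere 0 1. \<forall>t\<in>{0..<T}.
              cmod (G (of_real t * s)) = cmod (G (of_real t * s'))"
      by (simp add: normG norm_mult)
    show "\<forall>s\<in>sphere 0 1. horizontal_on {0..<T}
              (\<lambda>t. (Re (G (of_real t * s)), Im (G (of_real t * s)),
                     F (cmod (G (of_real t * s)))))"
    proof
      fix s :: complex assume "s \<in> sphere 0 1"
      then have s1: "cmod s = 1" by simp
      define \<alpha> where "\<alpha> = Arg s"
      have s0: "s \<noteq> 0" using s1 by auto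
      have sa: "s = cis \<alpha>" unfolding \<alpha>_def using rcis_cmod_Arg[of s] s1 by (simp add: rcis_def)
      define \<gamma> where "\<gamma> = (\<lambda>t. (Re (G (of_real t * s)), Im (G (of_real t * s)), F (cmod (G (of_real t * s)))))"
      have nG: "cmod (G (of_real t * s)) = \<bar>t\<bar>" for t by (simp add: normG norm_mult s1)
      have geq: "\<gamma> t = (t * cos (\<alpha> + \<phi> t), t * sin (\<alpha> + \<phi> t), F t)" if t: "t \<ge> 0" for t
      proof -
        have "G (of_real t * s) = of_real t * cis (\<alpha> + \<phi> t)"
          unfolding G_def using t by (simp add: norm_mult s1 sa cis_mult mult.assoc)
        then show ?thesis unfolding \<gamma>_def using nG[of t] t by simp
      qed
      have FL: "\<bar>F u - F v\<bar> \<le> (K * T) * \<bar>u - v\<bar>" if "u \<in> {0..T}" "v \<in> {0..T}" for u v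
      proof -
        have "norm (F u - F v) \<le> (K * T) * norm (u - v)"
        proof (rule field_differentiable_bound[of "{0..T}" F F'])
          fix z assume z: "z \<in> {0..T}"
          show "(F has_field_derivative F' z) (at z within {0..T})"
            by (rule DERIV_subset[OF dF[of z]]) (use z in auto)
          show "norm (F' z) \<le> K * T" using Fb[of z] z K0 mult_left_mono[of z T K] by auto
        qed (use that in auto)
        then show ?thesis by simp
      qed
      have lip: "norm (\<gamma> u - \<gamma> v) \<le> (2 * (4 * M + 5) + K * T) * \<bar>u - v\<bar>"
        if uv: "u \<in> {0..<T}" "v \<in> {0..<T}" for u v
      proof -
        define D where "D = G (of_real u * s) - G (of_real v * s)"
        have "cmod (of_real u * s - of_real v * s) = \<bar>u - v\<bar>"
          by (metis left_diff_distrib mult.commute mult.right_neutral norm_mult norm_of_real of_real_diff s1)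
        then have DL: "cmod D \<le> (4 * M + 5) * \<bar>u - v\<bar>" unfolding D_def
          using Gup[of "of_real u * s" "of_real v * s"] uv by (simp add: norm_mult s1)
        have "\<gamma> u - \<gamma> v = (Re D, Im D, F u - F v)"
          unfolding \<gamma>_def D_def using nG[of u] nG[of v] uv by simp
        then have "norm (\<gamma> u - \<gamma> v) \<le> \<bar>Re D\<bar> + (\<bar>Im D\<bar> + \<bar>F u - F v\<bar>)"
          using norm_Pair_le[of "Re D" "(Im D, F u - F v)"] norm_Pair_le[of "Im D" "F u - F v"] by simp
        also have "\<dots> \<le> 2 * cmod D + (K * T) * \<bar>u - v\<bar>"
          using abs_Re_le_cmod[of D] abs_Im_le_cmod[of D] FL[of u v] uv by simp
        also have "\<dots> \<le> (2 * (4 * M + 5) + K * T) * \<bar>u - v\<bar>" using DL by (simp add: algebra_simps)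
        finally show ?thesis .
      qed
      have C0: "2 * (4 * M + 5) + K * T \<ge> 0" using M1 K0 T0 by simp
      have ac: "abs_cont_on {0..<T} \<gamma>"
        unfolding abs_cont_on_def
      proof (intro allI impI)
        fix c d assume cd: "{c..d} \<subseteq> {0..<T}"
        show "abs_cont_on_interval c d \<gamma>"
          by (rule lip_abs_cont[OF C0]) (use cd lip in blast)
      qed
      have der: "\<exists>x' y' z'. (\<gamma> has_vector_derivative (x', y', z')) (at t) \<and>
            z' + x' * fst (snd (\<gamma> t)) / 2 - fst (\<gamma> t) * y' / 2 = 0" if t: "0 < t" "t < T" for t
      proof -
        define \<theta> where "\<theta> = \<alpha> + \<phi> t"
        have d1: "((\<lambda>u. u * cos (\<alpha> + \<phi> u)) has_real_derivative (cos \<theta> - t * sin \<theta> * g t)) (at t)"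
          unfolding \<theta>_def by (auto intro!: derivative_eq_intros dphi t)
        have d2: "((\<lambda>u. u * sin (\<alpha> + \<phi> u)) has_real_derivative (sin \<theta> + t * cos \<theta> * g t)) (at t)"
          unfolding \<theta>_def by (auto intro!: derivative_eq_intros dphi t)
        have "(F has_real_derivative F' t) (at t within {0<..})"
          by (rule DERIV_subset[OF dF[of t]]) (use t in auto)
        moreover have "at t within {0<..} = at t" by (rule at_within_open) (use t in auto)
        ultimately have d3: "(F has_real_derivative F' t) (at t)" by simp
        have "((\<lambda>u. (u * cos (\<alpha> + \<phi> u), u * sin (\<alpha> + \<phi> u), F u)) has_vector_derivative
               (cos \<theta> - t * sin \<theta> * g t, sin \<theta> + t * cos \<theta> * g t, F' t)) (at t)"
          using d1 d2 d3 unfolding has_real_derivative_iff_has_vector_derivative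
          by (intro has_vector_derivative_Pair)
        then have dg: "(\<gamma> has_vector_derivative
               (cos \<theta> - t * sin \<theta> * g t, sin \<theta> + t * cos \<theta> * g t, F' t)) (at t)"
          by (rule has_vector_derivative_transform_within_open[of _ _ _ "{0<..}"]) (use t geq in auto)
        have gt: "t^2 * g t = 2 * F' t" unfolding g_def using t by (simp add: field_simps)
        have "F' t + (cos \<theta> - t * sin \<theta> * g t) * (t * sin \<theta>) / 2 - (t * cos \<theta>) * (sin \<theta> + t * cos \<theta> * g t) / 2
            = F' t - (t^2 * g t) * ((sin \<theta>)^2 + (cos \<theta>)^2) / 2"
        proof -
          have key: "\<And>S C :: real. F' t + (C - t * S * g t) * (t * S) / 2 - (t * C) * (S + t * C * g t) / 2
            = F' t - (t^2 * g t) * (S^2 + C^2) / 2" by (simp add: field_simps power2_eq_square)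
          show ?thesis by (rule key)
        qed
        also have "\<dots> = 0" using gt by simp
        finally have eq: "F' t + (cos \<theta> - t * sin \<theta> * g t) * (t * sin \<theta>) / 2 - (t * cos \<theta>) * (sin \<theta> + t * cos \<theta> * g t) / 2 = 0" .
        show ?thesis
          using dg eq geq[of t] t unfolding \<theta>_def by auto
      qed
      have ae: "AE t in lborel. t \<in> {0..<T} \<longrightarrow>
        (\<exists>x' y' z'. (\<gamma> has_vector_derivative (x', y', z')) (at t) \<and>
            z' + x' * fst (snd (\<gamma> t)) / 2 - fst (\<gamma> t) * y' / 2 = 0)"
        using AE_lborel_singleton[of "0::real"]
        by (rule eventually_mono) (use der in auto)
      have "horizontal_on {0..<T} \<gamma>"
        unfolding horizontal_on_def using ac ae by blast
      then show "horizontal_on {0..<T} (\<lambda>t. (Re (G (of_real t * s)), Im (G (of_real t * s)), F (cmod (G (of_real t * s)))))"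
        unfolding \<gamma>_def .
    qed
  qed
  qed
qed

end
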